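(* Suppose Assumption 1 holds. Let $x\in\operatorname{dom}\psi$, let $H$ be a symmetric matrix with $\lambda_{\min}(H)=\sigma>0$, and let $d$ satisfy the $\eta$-inexactness condition for $Q^x_H$ for some $\eta\in[0,1)$. Then, with $\Delta \coloneqq \nabla f(x)^Td + \psi(x+d)-\psi(x)$, $$\Delta \le -\frac{1}{1+\sqrt\eta}\, d^THd \le -\frac{\sigma}{1+\sqrt\eta}\|d\|^2.$$ Moreover, for any $\beta,\gamma\in(0,1)$ the backtracking procedure that returns $\alpha=\beta^i$ for the smallest nonnegative integer $i$ with $F(x+\alpha d)\le F(x)+\alpha\gamma\Delta$ terminates after finitely many steps and $$\alpha\ge \bar\alpha\coloneqq \min\left\{1,\ \frac{2\beta(1-\gamma)\sigma}{L(1+\sqrt\eta)}\right\}.$$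
   Context: Problem setting: $F(x)=f(x)+\psi(x)$ on $\mathbb{R}^n$. Assumption 1: $f:\mathbb{R}^n\to\mathbb{R}$ is differentiable with $L$-Lipschitz continuous gradient for some $L>0$; $\psi:\mathbb{R}^n\to\mathbb{R}\cup\{+\infty\}$ is convex, proper and closed; $F$ is bounded below; and the solution set $\Omega=\{x: F(x)=F^*\}$, $F^*=\inf F$, is nonempty. For $x\in\mathbb{R}^n$ and a symmetric matrix $H$, $Q^x_H(d) \coloneqq \nabla f(x)^T d + \frac12 d^T H d + \psi(x+d) - \psi(x)$ (so $Q^x_H(0)=0$) and $Q^*\coloneqq\inf_d Q^x_H(d)$. A vector $d$ satisfies the $\eta$-inexactness condition (for $Q=Q^x_H$) if $Q(d)-Q^*\le \eta(Q(0)-Q^* )$, equivalently $Q(d)\le(1-\eta)Q^*$. $\lambda_{\min}(H)$ denotes the smallest eigenvalue of $H$. *)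

theory Defs
  imports "HOL-Analysis.Analysis"
begin

definition dom_fun :: "('a \<Rightarrow> ereal) \<Rightarrow> 'a set" where
  "dom_fun g = {x. g x < \<infinity>}"

definition ext_convex :: "('a::real_vector \<Rightarrow> ereal) \<Rightarrow> bool" where
  "ext_convex g \<longleftrightarrow> (\<forall>x y (t::real). 0 \<le> t \<and> t \<le> 1 \<longrightarrow>
      g ((1 - t) *\<^sub>R x + t *\<^sub>R y) \<le> ereal (1 - t) * g x + ereal t * g y)"

definition ext_proper :: "('a \<Rightarrow> ereal) \<Rightarrow> bool" where
  "ext_proper g \<longleftrightarrow> (\<forall>x. g x \<noteq> -\<infinity>) \<and> dom_fun g \<noteq> {}"

definition ext_closed :: "('a::topological_space \<Rightarrow> ereal) \<Rightarrow> bool" where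
  "ext_closed g \<longleftrightarrow> closed {(x, r::real). g x \<le> ereal r}"

definition lambda_min :: "real^'n^'n \<Rightarrow> real" where
  "lambda_min H = Min {l. \<exists>v. v \<noteq> 0 \<and> H *v v = l *\<^sub>R v}"

definition Qmodel :: "(real^'n) \<Rightarrow> ((real^'n) \<Rightarrow> ereal) \<Rightarrow> real^'n \<Rightarrow> real^'n^'n \<Rightarrow> real^'n \<Rightarrow> ereal" where
  "Qmodel g \<psi> x H d = ereal (g \<bullet> d + (1/2) * (d \<bullet> (H *v d))) + \<psi> (x + d) - \<psi> x"

definition Qstar :: "(real^'n) \<Rightarrow> ((real^'n) \<Rightarrow> ereal) \<Rightarrow> real^'n \<Rightarrow> real^'n^'n \<Rightarrow> ereal" where
  "Qstar g \<psi> x H = (INF d. Qmodel g \<psi> x H d)"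

definition eta_inexact :: "real \<Rightarrow> (real^'n) \<Rightarrow> ((real^'n) \<Rightarrow> ereal) \<Rightarrow> real^'n \<Rightarrow> real^'n^'n \<Rightarrow> real^'n \<Rightarrow> bool" where
  "eta_inexact \<eta> g \<psi> x H d \<longleftrightarrow>
     Qmodel g \<psi> x H d - Qstar g \<psi> x H \<le> ereal \<eta> * (Qmodel g \<psi> x H 0 - Qstar g \<psi> x H)"

end

theory Submission
  imports Defs
begin


lemma sym_dot:
  fixes H :: "real^'n^'n"
  assumes "transpose H = H"
  shows "(H *v u) \<bullet> w = u \<bullet> (H *v w)"
proof -
  have "(H *v u) \<bullet> w = (u v* H) \<bullet> w"
    by (metis assms transpose_matrix_vector)
  also have "\<dots> = u \<bullet> (H *v w)" by (rule dot_lmul_matrix)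
  finally show ?thesis .
qed

lemma quad_scale:
  fixes H :: "real^'n^'n"
  shows "(c *\<^sub>R v) \<bullet> (H *v (c *\<^sub>R v)) = c^2 * (v \<bullet> (H *v v))"
  by (simp add: matrix_vector_mult_scaleR power2_eq_square)

lemma psd_zero:
  fixes M :: "real^'n^'n"
  assumes sym: "transpose M = M" and psd: "\<And>v. v \<bullet> (M *v v) \<ge> 0" and u0: "u \<bullet> (M *v u) = 0"
  shows "M *v u = 0"
proof -
  have key: "w \<bullet> (M *v u) = 0" for w
  proof (rule ccontr)
    let ?b = "w \<bullet> (M *v u)" and ?c = "w \<bullet> (M *v w)"
    assume nz: "?b \<noteq> 0"
    define t where "t = - ?b / (?c + 1)"
    have c0: "?c \<ge> 0" using psd by blast
    have "(u + t *\<^sub>R w) \<bullet> (M *v (u + t *\<^sub>R w)) = u \<bullet> (M *v u) + 2 * t * ?b + t^2 * ?c"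
      using sym_dot[OF sym, of w u] 
      by (simp add: matrix_vector_right_distrib matrix_vector_mult_scaleR inner_add_left inner_add_right
          power2_eq_square algebra_simps inner_commute)
    also have "\<dots> < 0"
    proof -
      have tc: "t * (?c + 1) = - ?b" using c0 by (simp add: t_def)
      have "(?c+1)^2 * (2 * t * ?b + t^2 * ?c) = 2 * (t*(?c+1)) * ?b * (?c+1) + (t*(?c+1))^2 * ?c"
        by (simp add: power2_eq_square algebra_simps)
      also have "\<dots> = - (?b^2 * (?c + 2))" unfolding tc by (simp add: power2_eq_square algebra_simps)
      also have "\<dots> < 0" using nz c0 by (simp add: mult_pos_pos)
      finally have "(?c+1)^2 * (2 * t * ?b + t^2 * ?c) < 0" .
      moreover have "(?c+1)^2 > 0" using c0 by simp
      ultimately show ?thesis using u0 by (simp add: mult_less_0_iff)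
    qed
    finally show False using psd by (meson not_le)
  qed
  have "(M *v u) \<bullet> (M *v u) = 0" by (rule key)
  then show ?thesis by simp
qed

lemma eig_finite:
  fixes H :: "real^'n^'n"
  assumes sym: "transpose H = H"
  shows "finite {l. \<exists>v. v \<noteq> 0 \<and> H *v v = l *\<^sub>R v}"
proof (rule ccontr)
  let ?S = "{l. \<exists>v. v \<noteq> 0 \<and> H *v v = l *\<^sub>R v}"
  assume "infinite ?S"
  then have "\<exists>B. finite B \<and> card B = DIM(real^'n) + 1 \<and> B \<subseteq> ?S"
    by (rule infinite_arbitrarily_large)
  then obtain B where B': "finite B \<and> card B = DIM(real^'n) + 1 \<and> B \<subseteq> ?S"
    by (rule exE)
  then have B: "finite B" "card B = DIM(real^'n) + 1" "B \<subseteq> ?S" by simp_all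
  define ev where "ev l = (SOME v. v \<noteq> 0 \<and> H *v v = l *\<^sub>R v)" for l
  have ev: "ev l \<noteq> 0 \<and> H *v ev l = l *\<^sub>R ev l" if "l \<in> ?S" for l
  proof -
    from that obtain v where "v \<noteq> 0 \<and> H *v v = l *\<^sub>R v" by blast
    then show ?thesis unfolding ev_def by (rule someI)
  qed
  have inj: "inj_on ev B"
  proof (rule inj_onI)
    fix l1 l2 assume l: "l1 \<in> B" "l2 \<in> B" "ev l1 = ev l2"
    have e1: "ev l1 \<noteq> 0 \<and> H *v ev l1 = l1 *\<^sub>R ev l1" using l(1) B(3) ev by blast
    have e2: "ev l2 \<noteq> 0 \<and> H *v ev l2 = l2 *\<^sub>R ev l2" using l(2) B(3) ev by blast
    have "l1 *\<^sub>R ev l1 = H *v ev l1" using e1 by simp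
    also have "\<dots> = H *v ev l2" unfolding l(3) ..
    also have "\<dots> = l2 *\<^sub>R ev l2" using e2 by (elim conjE)
    also have "\<dots> = l2 *\<^sub>R ev l1" unfolding l(3) ..
    finally have "l1 *\<^sub>R ev l1 = l2 *\<^sub>R ev l1" .
    then show "l1 = l2" using e1 by simp
  qed
  have orth: "pairwise orthogonal (ev ` B)"
    unfolding pairwise_def
  proof (clarify)
    fix l1 l2 assume l: "l1 \<in> B" "l2 \<in> B" "ev l1 \<noteq> ev l2"
    then have ne: "l1 \<noteq> l2" by auto
    have e1: "H *v ev l1 = l1 *\<^sub>R ev l1" using ev B(3) l(1) by blast
    have e2: "H *v ev l2 = l2 *\<^sub>R ev l2" using ev B(3) l(2) by blast
    have "l1 * (ev l1 \<bullet> ev l2) = (H *v ev l1) \<bullet> ev l2" using e1 by simp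
    also have "\<dots> = ev l1 \<bullet> (H *v ev l2)" by (rule sym_dot[OF sym])
    also have "\<dots> = l2 * (ev l1 \<bullet> ev l2)" using e2 by simp
    finally show "orthogonal (ev l1) (ev l2)" using ne unfolding orthogonal_def by simp
  qed
  have "0 \<notin> ev ` B"
  proof
    assume "0 \<in> ev ` B"
    then obtain l where l: "l \<in> B" "ev l = 0" by (elim imageE) simp
    have "l \<in> ?S" using l(1) by (rule subsetD[OF B(3)])
    then show False using ev l(2) by blast
  qed
  then have ind: "independent (ev ` B)" by (rule pairwise_orthogonal_independent[OF orth])
  have "card (ev ` B) \<le> DIM(real^'n)" using independent_bound[OF ind] by (rule conjunct2)
  moreover have "card (ev ` B) = card B" using inj by (rule card_image)
  ultimately show False using B(2) by simp
qed


lemma eig_bound: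
  fixes H :: "real^'n^'n"
  assumes sym: "transpose H = H"
  shows "v \<bullet> (H *v v) \<ge> lambda_min H * (norm v)^2"
proof -
  let ?q = "\<lambda>y. y \<bullet> (H *v y)"
  have cont: "continuous_on (sphere 0 1) ?q"
    by (intro continuous_intros)
  have ne: "sphere (0::real^'n) 1 \<noteq> {}" by simp
  obtain u where u: "u \<in> sphere 0 1" "\<And>y. y \<in> sphere 0 1 \<Longrightarrow> ?q u \<le> ?q y"
    using continuous_attains_inf[OF compact_sphere ne cont] by blast
  define m where "m = ?q u"
  have bound: "?q w \<ge> m * (norm w)^2" for w
  proof (cases "w = 0")
    case True then show ?thesis by simp
  next
    case False
    define y where "y = (1 / norm w) *\<^sub>R w"
    have "y \<in> sphere 0 1" using False by (simp add: y_def)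
    then have "m \<le> ?q y" using u m_def by blast
    also have "?q y = (1 / norm w)^2 * ?q w" unfolding y_def by (rule quad_scale)
    finally have "m * (norm w)^2 \<le> (1 / norm w)^2 * ?q w * (norm w)^2"
      by (simp add: mult_right_mono)
    also have "\<dots> = ?q w" using False by (simp add: power2_eq_square field_simps)
    finally show ?thesis .
  qed
  define M where "M = H - m *\<^sub>R mat 1"
  have Mv: "M *v w = H *v w - m *\<^sub>R w" for w
    unfolding M_def by (simp add: matrix_vector_mult_diff_rdistrib scaleR_matrix_vector_assoc[symmetric])
  have Hij: "H$j$i = H$i$j" for i j
    using arg_cong[OF sym, of "\<lambda>A. A$i$j"] by (simp add: transpose_def)
  have Msym: "transpose M = M" unfolding M_def
    by (simp add: transpose_def mat_def vec_eq_iff Hij)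
  have "M *v u = 0"
  proof (rule psd_zero[OF Msym])
    show "w \<bullet> (M *v w) \<ge> 0" for w using bound[of w] by (simp add: Mv inner_diff_right power2_norm_eq_inner)
    show "u \<bullet> (M *v u) = 0" using u(1) by (simp add: Mv inner_diff_right m_def power2_norm_eq_inner[symmetric])
  qed
  then have "H *v u = m *\<^sub>R u" by (simp add: Mv)
  moreover have "u \<noteq> 0" using u(1) by auto
  ultimately have "m \<in> {l. \<exists>v. v \<noteq> 0 \<and> H *v v = l *\<^sub>R v}" by (intro CollectI exI conjI)
  then have "lambda_min H \<le> m" unfolding lambda_min_def by (rule Min_le[OF eig_finite[OF sym]])
  then have "lambda_min H * (norm v)^2 \<le> m * (norm v)^2" by (simp add: mult_right_mono)
  then show ?thesis using bound[of v] by linarith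
qed



lemma descent:
  fixes f :: "real^'n \<Rightarrow> real" and gradf :: "real^'n \<Rightarrow> real^'n"
  assumes grad: "\<And>y. (f has_derivative (\<lambda>h. gradf y \<bullet> h)) (at y)"
    and Lip: "\<And>y z. norm (gradf y - gradf z) \<le> L * norm (y - z)"
  shows "f (y + h) \<le> f y + gradf y \<bullet> h + L/2 * (norm h)^2"
proof -
  define \<phi> where "\<phi> t = f (y + t *\<^sub>R h) - t * (gradf y \<bullet> h) - L/2 * t^2 * (norm h)^2" for t
  have D: "(\<phi> has_real_derivative (gradf (y + t *\<^sub>R h) \<bullet> h - gradf y \<bullet> h - L * t * (norm h)^2)) (at t)" for t
  proof -
    have l: "((\<lambda>t. y + t *\<^sub>R h) has_derivative (\<lambda>s. s *\<^sub>R h)) (at t)"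
      by (auto intro!: derivative_eq_intros)
    have "((\<lambda>t. f (y + t *\<^sub>R h)) has_derivative (\<lambda>s. gradf (y + t *\<^sub>R h) \<bullet> (s *\<^sub>R h))) (at t)"
      using has_derivative_compose[OF l grad] .
    moreover have "(\<lambda>s. gradf (y + t *\<^sub>R h) \<bullet> (s *\<^sub>R h)) = (*) (gradf (y + t *\<^sub>R h) \<bullet> h)"
      by (auto simp: algebra_simps)
    ultimately have d1: "((\<lambda>t. f (y + t *\<^sub>R h)) has_real_derivative (gradf (y + t *\<^sub>R h) \<bullet> h)) (at t)"
      unfolding has_field_derivative_def by simp
    have d2: "((\<lambda>t. t * (gradf y \<bullet> h)) has_real_derivative (gradf y \<bullet> h)) (at t)"
      by (auto intro!: derivative_eq_intros)
    have d3: "((\<lambda>t. L/2 * t^2 * (norm h)^2) has_real_derivative (L * t * (norm h)^2)) (at t)"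
      by (auto intro!: derivative_eq_intros)
    show ?thesis unfolding \<phi>_def[abs_def] by (intro DERIV_diff d1 d2 d3)
  qed
  have "\<phi> 1 \<le> \<phi> 0"
  proof (rule DERIV_nonpos_imp_nonincreasing[of 0 1 \<phi>])
    fix t :: real assume t: "0 \<le> t" "t \<le> 1"
    have "(gradf (y + t *\<^sub>R h) - gradf y) \<bullet> h \<le> norm (gradf (y + t *\<^sub>R h) - gradf y) * norm h"
      by (rule norm_cauchy_schwarz)
    also have "\<dots> \<le> L * norm (t *\<^sub>R h) * norm h"
      using Lip[of "y + t *\<^sub>R h" y] by (simp add: mult_right_mono)
    also have "\<dots> = L * t * (norm h)^2" using t by (simp add: power2_eq_square)
    finally have "gradf (y + t *\<^sub>R h) \<bullet> h - gradf y \<bullet> h - L * t * (norm h)^2 \<le> 0"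
      by (simp add: inner_diff_left)
    then show "\<exists>y. (\<phi> has_real_derivative y) (at t) \<and> y \<le> 0" using D by blast
  qed simp
  then show ?thesis by (simp add: \<phi>_def)
qed

lemma ext_convex_seg:
  assumes cvx: "ext_convex \<psi>" and t: "0 \<le> t" "t \<le> 1"
  shows "\<psi> (x + t *\<^sub>R d) \<le> ereal (1 - t) * \<psi> x + ereal t * \<psi> (x + d)"
proof -
  have "(1 - t) *\<^sub>R x + t *\<^sub>R (x + d) = x + t *\<^sub>R d" by (simp add: algebra_simps)
  then show ?thesis using cvx t unfolding ext_convex_def by metis
qed

lemma real_key:
  fixes D a \<eta> :: real
  assumes a: "a \<ge> 0" and eta: "0 \<le> \<eta>" "\<eta> < 1"
    and H: "\<And>t. 0 \<le> t \<Longrightarrow> t \<le> 1 \<Longrightarrow> D + a/2 \<le> (1 - \<eta>) * (t * D + t^2 * a / 2)"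
  shows "D \<le> - (1 / (1 + sqrt \<eta>)) * a"
proof -
  define s where "s = sqrt \<eta>"
  have s: "0 \<le> s" "s < 1" "s^2 = \<eta>" using eta by (auto simp: s_def real_sqrt_less_iff[of _ 1, simplified])
  have goal: "(1 + s) * D + a \<le> 0"
  proof (cases "D \<le> -a")
    case True
    have "s * D \<le> 0" using True s a by (intro mult_nonneg_nonpos) auto
    then show ?thesis using True by (simp add: algebra_simps)
  next
    case False
    then have Dg: "D > -a" by simp
    have H0: "D + a/2 \<le> 0" using H[of 0] by simp
    then have "D < 0" "a > 0" using Dg by linarith+
    define t where "t = - D / a"
    have t: "0 \<le> t" "t \<le> 1" using \<open>D < 0\<close> \<open>a > 0\<close> Dg by (auto simp: t_def field_simps)
    have "D + a/2 \<le> (1 - \<eta>) * (t * D + t^2 * a / 2)" using H t by blast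
    also have "t * D + t^2 * a / 2 = (- (D^2)) / (2 * a)" using \<open>a > 0\<close> by (simp add: t_def power2_eq_square field_simps)
    finally have "2 * a * (D + a/2) \<le> 2 * a * ((1 - \<eta>) * ((- (D^2)) / (2 * a)))"
      by (rule mult_left_mono) (use \<open>a > 0\<close> in simp)
    moreover have "2*a*((1-\<eta>)*((- (D^2))/(2*a))) = -((1-\<eta>)*D^2)" using \<open>a > 0\<close> by (simp add: field_simps)
    moreover have "2*a*(D+a/2) = 2*a*D + a^2" by (simp add: power2_eq_square algebra_simps)
    moreover have "(1-\<eta>)*D^2 = (1-s^2)*D^2" using s(3) by simp
    ultimately have "2*a*D + a^2 + (1 - s^2) * D^2 \<le> 0" by linarith
    then have prod: "(a + (1+s)*D) * (a + (1-s)*D) \<le> 0"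
      by (simp add: power2_eq_square algebra_simps)
    have "(1-s)*D > -a"
    proof -
      have "s * D \<le> 0" using \<open>D < 0\<close> s by (intro mult_nonneg_nonpos) auto
      then have "(1-s)*D \<ge> D" by (simp add: algebra_simps)
      then show ?thesis using Dg by linarith
    qed
    then have "a + (1-s)*D > 0" by linarith
    then have "a + (1+s)*D \<le> 0" using prod by (simp add: mult_le_0_iff)
    then show ?thesis by (simp add: algebra_simps)
  qed
  have "D * (1 + s) \<le> -a" using goal by (simp add: algebra_simps)
  then have "D \<le> -a / (1 + s)" using s by (simp add: field_simps)
  then show ?thesis by (simp add: s_def)
qed



theorem corollary1:
  fixes f :: "real^'n \<Rightarrow> real" and gradf :: "real^'n \<Rightarrow> real^'n"
    and \<psi> :: "real^'n \<Rightarrow> ereal" and L :: real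
    and x d :: "real^'n" and H :: "real^'n^'n" and \<sigma> \<eta> :: real
  defines "F \<equiv> (\<lambda>y. ereal (f y) + \<psi> y)"
  assumes grad: "\<And>y. (f has_derivative (\<lambda>h. gradf y \<bullet> h)) (at y)"
    and Lpos: "L > 0"
    and Lip: "\<And>y z. norm (gradf y - gradf z) \<le> L * norm (y - z)"
    and psi_cvx: "ext_convex \<psi>" and psi_proper: "ext_proper \<psi>" and psi_closed: "ext_closed \<psi>"
    and F_bdd: "\<exists>c::real. \<forall>y. ereal c \<le> F y"
    and Omega: "\<exists>y. F y = (INF z. F z)"
    and xdom: "x \<in> dom_fun \<psi>"
    and Hsym: "transpose H = H"
    and sigma: "lambda_min H = \<sigma>" and sigma_pos: "\<sigma> > 0"
    and eta: "0 \<le> \<eta>" "\<eta> < 1"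
    and inexact: "eta_inexact \<eta> (gradf x) \<psi> x H d"
  shows "(let \<Delta> = ereal (gradf x \<bullet> d) + \<psi> (x + d) - \<psi> x in
           \<Delta> \<le> ereal (- (1 / (1 + sqrt \<eta>)) * (d \<bullet> (H *v d))) \<and>
           ereal (- (1 / (1 + sqrt \<eta>)) * (d \<bullet> (H *v d)))
             \<le> ereal (- (\<sigma> / (1 + sqrt \<eta>)) * (norm d)\<^sup>2) \<and>
           (\<forall>\<beta> \<gamma>::real. 0 < \<beta> \<and> \<beta> < 1 \<and> 0 < \<gamma> \<and> \<gamma> < 1 \<longrightarrow>
              (let P = (\<lambda>i::nat. F (x + (\<beta> ^ i) *\<^sub>R d) \<le> F x + ereal (\<beta> ^ i * \<gamma>) * \<Delta>) in
                (\<exists>i. P i) \<and>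
                \<beta> ^ (LEAST i. P i) \<ge> min 1 (2 * \<beta> * (1 - \<gamma>) * \<sigma> / (L * (1 + sqrt \<eta>))))))"
proof -
  define a where "a = d \<bullet> (H *v d)"
  define s where "s = sqrt \<eta>"
  define n2 where "n2 = (norm d)^2"
  have s0: "s \<ge> 0" using eta by (simp add: s_def)
  have s1: "1 + s > 0" using s0 by simp
  have n20: "n2 \<ge> 0" by (simp add: n2_def)
  have psi_ninf: "\<psi> y \<noteq> -\<infinity>" for y using psi_proper unfolding ext_proper_def by auto
  obtain px where px: "\<psi> x = ereal px"
    using xdom psi_ninf[of x] unfolding dom_fun_def by (cases "\<psi> x") auto
  have eb: "v \<bullet> (H *v v) \<ge> \<sigma> * (norm v)^2" for v using eig_bound[OF Hsym, of v] sigma by simp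
  have a_ge: "a \<ge> \<sigma> * n2" using eb[of d] by (simp add: a_def n2_def)
  have a0: "a \<ge> 0" using a_ge sigma_pos n20 by (smt (verit) mult_nonneg_nonneg)
  obtain c where c: "\<And>y. ereal c \<le> F y" using F_bdd by blast
  define t0 where "t0 = min 1 (\<sigma> / L)"
  have t0: "0 < t0" "t0 \<le> 1" "L * t0 \<le> \<sigma>" using Lpos sigma_pos
    by (auto simp: t0_def min_def field_simps)
  define B where "B = (c - f x - px) / t0"
  have Qlb: "ereal B \<le> Qmodel (gradf x) \<psi> x H e" for e
  proof (cases "\<psi> (x + e) = \<infinity>")
    case True
    then show ?thesis by (simp add: Qmodel_def px)
  next
    case False
    then obtain p' where p': "\<psi> (x + e) = ereal p'" using psi_ninf[of "x + e"] by (cases "\<psi> (x + e)") auto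
    have "\<psi> (x + t0 *\<^sub>R e) \<le> ereal (1 - t0) * \<psi> x + ereal t0 * \<psi> (x + e)"
      using ext_convex_seg[OF psi_cvx, of t0 x e] t0 by simp
    then have cv: "\<psi> (x + t0 *\<^sub>R e) \<le> ereal ((1-t0)*px + t0*p')" by (simp add: px p')
    have fd: "f (x + t0 *\<^sub>R e) \<le> f x + gradf x \<bullet> (t0 *\<^sub>R e) + L/2 * (norm (t0 *\<^sub>R e))^2"
      by (rule descent[OF grad Lip])
    have "ereal c \<le> ereal (f (x + t0 *\<^sub>R e)) + \<psi> (x + t0 *\<^sub>R e)" using c[of "x + t0 *\<^sub>R e"] by (simp add: F_def)
    also have "\<dots> \<le> ereal (f (x + t0 *\<^sub>R e)) + ereal ((1-t0)*px + t0*p')" using cv by (rule add_left_mono)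
    finally have c1: "c \<le> f (x + t0 *\<^sub>R e) + ((1-t0)*px + t0*p')" by simp
    define ae where "ae = e \<bullet> (H *v e)"
    define ne where "ne = (norm e)^2"
    have ae: "ae \<ge> \<sigma> * ne" using eb[of e] by (simp add: ae_def ne_def)
    have ne0: "ne \<ge> 0" by (simp add: ne_def)
    have fd2: "f (x + t0 *\<^sub>R e) \<le> f x + t0 * (gradf x \<bullet> e) + L/2 * t0^2 * ne"
      using fd by (simp add: ne_def power_mult_distrib)
    have m1: "t0 * (\<sigma> * ne) \<le> t0 * ae" using ae t0 by (simp add: mult_left_mono)
    have m2: "(L * t0) * (t0 * ne) \<le> \<sigma> * (t0 * ne)" using t0 ne0 by (intro mult_right_mono) auto
    have "c - f x - px \<le> t0 * (gradf x \<bullet> e + 1/2 * ae + p' - px)"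
      using c1 fd2 m1 m2 by (simp add: algebra_simps power2_eq_square)
    then have "B \<le> gradf x \<bullet> e + 1/2 * ae + p' - px" using t0 by (simp add: B_def pos_divide_le_eq mult.commute)
    then show ?thesis by (simp add: Qmodel_def p' px ae_def)
  qed
  have QB: "ereal B \<le> Qstar (gradf x) \<psi> x H" unfolding Qstar_def by (rule INF_greatest) (rule Qlb)
  have Q0: "Qmodel (gradf x) \<psi> x H 0 = 0" by (simp add: Qmodel_def px)
  have Qle: "Qstar (gradf x) \<psi> x H \<le> Qmodel (gradf x) \<psi> x H e" for e
    unfolding Qstar_def by (rule INF_lower) simp
  have "Qstar (gradf x) \<psi> x H \<le> 0" using Qle[of 0] Q0 by simp
  then obtain q where q: "Qstar (gradf x) \<psi> x H = ereal q" "q \<le> 0"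
    using QB by (cases "Qstar (gradf x) \<psi> x H") auto
  have inex: "Qmodel (gradf x) \<psi> x H d - ereal q \<le> ereal (\<eta> * (- q))"
    using inexact unfolding eta_inexact_def q(1) Q0 by simp
  have "\<psi> (x + d) \<noteq> \<infinity>"
  proof
    assume "\<psi> (x + d) = \<infinity>"
    then have "Qmodel (gradf x) \<psi> x H d = \<infinity>" by (simp add: Qmodel_def px)
    then show False using inex by simp
  qed
  then obtain p where p: "\<psi> (x + d) = ereal p" using psi_ninf[of "x + d"] by (cases "\<psi> (x + d)") auto
  define D where "D = gradf x \<bullet> d + p - px"
  have Deq: "ereal (gradf x \<bullet> d) + \<psi> (x + d) - \<psi> x = ereal D" by (simp add: p px D_def)
  have i1: "D + a/2 - q \<le> \<eta> * (- q)"
    using inex by (simp add: Qmodel_def p px D_def a_def)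
  have tq: "q \<le> t * D + t^2 * a / 2" if t: "0 \<le> t" "t \<le> 1" for t
  proof -
    have "\<psi> (x + t *\<^sub>R d) \<le> ereal (1 - t) * \<psi> x + ereal t * \<psi> (x + d)"
      using ext_convex_seg[OF psi_cvx, of t x d] t by simp
    then have cv: "\<psi> (x + t *\<^sub>R d) \<le> ereal ((1-t)*px + t*p)" by (simp add: px p)
    then obtain pt where pt: "\<psi> (x + t *\<^sub>R d) = ereal pt" using psi_ninf[of "x + t *\<^sub>R d"]
      by (cases "\<psi> (x + t *\<^sub>R d)") auto
    have ptle: "pt \<le> (1-t)*px + t*p" using cv pt by simp
    have "ereal q \<le> Qmodel (gradf x) \<psi> x H (t *\<^sub>R d)" using Qle q(1) by metis
    then have "q \<le> t * (gradf x \<bullet> d) + 1/2 * (t^2 * a) + pt - px"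
      by (simp add: Qmodel_def pt px a_def matrix_vector_mult_scaleR power2_eq_square)
    then show ?thesis using ptle by (simp add: D_def algebra_simps)
  qed
  have key: "D + a/2 \<le> (1 - \<eta>) * (t * D + t^2 * a / 2)" if "0 \<le> t" "t \<le> 1" for t
  proof -
    have "(1 - \<eta>) * q \<le> (1 - \<eta>) * (t * D + t^2 * a / 2)"
      using tq[OF that] eta by (intro mult_left_mono) auto
    then show ?thesis using i1 by (simp add: algebra_simps)
  qed
  have part1: "D \<le> - (1 / (1 + sqrt \<eta>)) * a" by (rule real_key[OF a0 eta key])
  have part2: "- (1 / (1 + sqrt \<eta>)) * a \<le> - (\<sigma> / (1 + sqrt \<eta>)) * n2"
  proof -
    have "\<sigma> * n2 / (1 + s) \<le> a / (1 + s)" using a_ge s1 by (intro divide_right_mono) auto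
    then show ?thesis by (simp add: s_def)
  qed
  have DD: "D * (1 + s) \<le> - (\<sigma> * n2)"
  proof -
    have "D \<le> (- (\<sigma> * n2)) / (1 + s)" using part1 part2 by (simp add: s_def)
    then show ?thesis using s1 by (simp only: le_divide_eq)
  qed
  show ?thesis
    unfolding Let_def Deq
  proof (intro conjI allI impI)
    show "ereal D \<le> ereal (- (1 / (1 + sqrt \<eta>)) * (d \<bullet> (H *v d)))" using part1 by (simp add: a_def)
    show "ereal (- (1 / (1 + sqrt \<eta>)) * (d \<bullet> (H *v d))) \<le> ereal (- (\<sigma> / (1 + sqrt \<eta>)) * (norm d)\<^sup>2)"
      using part2 by (simp add: a_def n2_def)
    fix \<beta> \<gamma> :: real
    assume bg: "0 < \<beta> \<and> \<beta> < 1 \<and> 0 < \<gamma> \<and> \<gamma> < 1"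
    then have b0: "0 < \<beta>" and b1: "\<beta> < 1" and g0: "0 < \<gamma>" and g1: "\<gamma> < 1" by auto
    define ab0 where "ab0 = 2 * (1 - \<gamma>) * \<sigma> / (L * (1 + s))"
    have ab0pos: "ab0 > 0" using g1 sigma_pos Lpos s1 by (simp add: ab0_def)
    have suff: "F (x + \<alpha> *\<^sub>R d) \<le> F x + ereal (\<alpha> * \<gamma>) * ereal D"
      if al: "0 < \<alpha>" "\<alpha> \<le> 1" "\<alpha> \<le> ab0" for \<alpha>
    proof -
      have "\<psi> (x + \<alpha> *\<^sub>R d) \<le> ereal (1 - \<alpha>) * \<psi> x + ereal \<alpha> * \<psi> (x + d)"
        using ext_convex_seg[OF psi_cvx, of \<alpha> x d] al by simp
      then have cv: "\<psi> (x + \<alpha> *\<^sub>R d) \<le> ereal ((1-\<alpha>)*px + \<alpha>*p)" by (simp add: px p)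
      then obtain pa where pa: "\<psi> (x + \<alpha> *\<^sub>R d) = ereal pa" using psi_ninf[of "x + \<alpha> *\<^sub>R d"]
        by (cases "\<psi> (x + \<alpha> *\<^sub>R d)") auto
      have pale: "pa \<le> (1-\<alpha>)*px + \<alpha>*p" using cv pa by simp
      have fd: "f (x + \<alpha> *\<^sub>R d) \<le> f x + gradf x \<bullet> (\<alpha> *\<^sub>R d) + L/2 * (norm (\<alpha> *\<^sub>R d))^2"
        by (rule descent[OF grad Lip])
      then have fd2: "f (x + \<alpha> *\<^sub>R d) \<le> f x + \<alpha> * (gradf x \<bullet> d) + L/2 * (\<alpha>^2 * n2)"
        by (simp add: n2_def power_mult_distrib)
      have A: "\<alpha> * (L * (1 + s)) \<le> 2 * (1 - \<gamma>) * \<sigma>"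
        using al(3) Lpos s1 by (simp add: ab0_def le_divide_eq)
      have B2: "\<alpha> * (L * (1 + s)) * n2 \<le> 2 * (1 - \<gamma>) * \<sigma> * n2"
        using A n20 by (rule mult_right_mono)
      have C: "(1 - \<gamma>) * (D * (1 + s)) \<le> (1 - \<gamma>) * (- (\<sigma> * n2))"
        using DD g1 by (intro mult_left_mono) auto
      have "(1 + s) * (L * \<alpha> * n2 + 2 * (1 - \<gamma>) * D) \<le> 0"
        using B2 C by (simp add: algebra_simps)
      then have E: "L * \<alpha> * n2 + 2 * (1 - \<gamma>) * D \<le> 0" using s1 by (simp add: mult_le_0_iff)
      have "\<alpha> * (L * \<alpha> * n2 + 2 * (1 - \<gamma>) * D) \<le> 0"
        using al(1) E by (intro mult_nonneg_nonpos) auto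
      then have "f (x + \<alpha> *\<^sub>R d) + pa \<le> f x + px + \<alpha> * \<gamma> * D"
        using fd2 pale by (simp add: D_def algebra_simps power2_eq_square)
      then show ?thesis by (simp add: F_def pa px)
    qed
    define P where "P = (\<lambda>i::nat. F (x + (\<beta> ^ i) *\<^sub>R d) \<le> F x + ereal (\<beta> ^ i * \<gamma>) * ereal D)"
    have Pb: "P i" if "\<beta> ^ i \<le> ab0" for i
      unfolding P_def using that b0 b1 by (intro suff) (auto simp: power_le_one)
    obtain i0 where "\<beta> ^ i0 < ab0" using real_arch_pow_inv[OF ab0pos b1] by blast
    then have ex: "\<exists>i. P i" using Pb by (meson less_imp_le)
    have lb: "\<beta> ^ (LEAST i. P i) \<ge> min 1 (2 * \<beta> * (1 - \<gamma>) * \<sigma> / (L * (1 + sqrt \<eta>)))"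
    proof (cases "(LEAST i. P i)")
      case 0
      then show ?thesis by simp
    next
      case (Suc j)
      then have "\<not> P j" using not_less_Least[of j P] by simp
      then have "\<beta> ^ j > ab0" using Pb by (meson not_le)
      then have "\<beta> * ab0 < \<beta> * \<beta> ^ j" using b0 by simp
      moreover have "\<beta> * ab0 = 2 * \<beta> * (1 - \<gamma>) * \<sigma> / (L * (1 + sqrt \<eta>))"
        by (simp add: ab0_def s_def)
      ultimately show ?thesis using Suc by simp
    qed
    show "\<exists>i. F (x + (\<beta> ^ i) *\<^sub>R d) \<le> F x + ereal (\<beta> ^ i * \<gamma>) * ereal D"
      using ex unfolding P_def .
    show "\<beta> ^ (LEAST i. F (x + (\<beta> ^ i) *\<^sub>R d) \<le> F x + ereal (\<beta> ^ i * \<gamma>) * ereal D)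
                   \<ge> min 1 (2 * \<beta> * (1 - \<gamma>) * \<sigma> / (L * (1 + sqrt \<eta>)))"
      using lb unfolding P_def .
  qed
qed

end
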